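(* The set of points $x\in[0,1]$ whose forward orbit $\{R^n(x):n\ge0\}$ is dense in $[0,1]$ is uncountable and dense in $[0,1]$.
   Context: Define $\rho$ on binary words: for $b=b_1b_2\dots$, $\rho(b)$ is obtained by deleting every digit $b_n=0$ and replacing every $b_n=1$ by $0$ if $n$ is odd and by $1$ if $n$ is even. For $x\in(0,1]$ let $\beta(x)$ be the unique binary expansion of $x$ with infinitely many $1$'s. Define $R:[0,1]\to[0,1]$ by $R(0)=2/3$ and, for $x\in(0,1]$, $R(x)=\sum_{n\ge1}c_n2^{-n}$ where $c=\rho(\beta(x))$. *)

theory Defs
  imports "HOL-Analysis.Analysis" "HOL-Library.Infinite_Set" "HOL-Library.Countable_Set"
begin

text \<open>Infinite binary words are modelled as w :: nat => bool, 0-indexed: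
  w k is the paper's digit b_(k+1).\<close>

definition word_val :: "(nat \<Rightarrow> bool) \<Rightarrow> real" where
  "word_val w = (\<Sum>k. (if w k then 1 else 0) / 2 ^ (Suc k))"

definition beta :: "real \<Rightarrow> (nat \<Rightarrow> bool)" where
  "beta x = (THE w. infinite {k. w k} \<and> word_val w = x)"

text \<open>rho: delete the digits 0; a digit 1 at (1-indexed) position n becomes 0 if n is
  odd and 1 if n is even.  For a word with infinitely many 1's, the k-th surviving digit
  comes from the k-th 1 (0-indexed position p = enumerate ..  k, i.e. n = p+1), so it
  equals 1 iff p is odd.\<close>
definition rho :: "(nat \<Rightarrow> bool) \<Rightarrow> (nat \<Rightarrow> bool)" where
  "rho w = (\<lambda>k. odd (enumerate {p. w p} k))"

definition R :: "real \<Rightarrow> real" where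
  "R x = (if x = 0 then 2/3 else word_val (rho (beta x)))"

end

theory Submission
  imports Defs "HOL-Library.Countable"
begin


lemma strict_mono_range_eq:
  fixes f g :: "nat \<Rightarrow> nat"
  assumes f: "strict_mono f" and g: "strict_mono g" and r: "range f = range g"
  shows "f n = g n"
proof (induction n rule: less_induct)
  case (less n)
  show ?case
  proof (rule ccontr)
    assume ne: "f n \<noteq> g n"
    show False
    proof (cases "f n < g n")
      case True
      have "f n \<in> range g" using r by auto
      then obtain m where m: "f n = g m" by auto
      with True have "m < n" using g by (simp add: strict_mono_less)
      with less m have "f m = f n" by simp
      with \<open>m < n\<close> f show False using strict_monoD[OF f \<open>m < n\<close>] by simp
    next
      case False
      with ne have lt: "g n < f n" by simp
      have "g n \<in> range f" using r by auto
      then obtain m where m: "g n = f m" by auto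
      with lt have "m < n" using f by (simp add: strict_mono_less)
      with less m have "g m = g n" by simp
      with \<open>m < n\<close> g show False using strict_monoD[OF g \<open>m < n\<close>] by simp
    qed
  qed
qed

lemma enumerate_range_strict_mono:
  fixes f :: "nat \<Rightarrow> nat"
  assumes "strict_mono f"
  shows "enumerate (range f) = f"
proof -
  have inf: "infinite (range f)"
  proof
    assume "finite (range f)"
    then have "finite (UNIV::nat set)" using finite_imageD strict_mono_imp_inj_on[OF assms] by blast
    then show False by simp
  qed
  show ?thesis
    by (rule ext, rule strict_mono_range_eq[OF strict_mono_enumerate[OF inf] assms])
       (simp add: range_enumerate[OF inf])
qed

lemma rho_strict_mono:
  assumes "strict_mono f" "{p. w p} = range f"
  shows "rho w = (\<lambda>k. odd (f k))"
  unfolding rho_def assms(2) enumerate_range_strict_mono[OF assms(1)] ..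

definition app :: "bool list \<Rightarrow> (nat \<Rightarrow> bool) \<Rightarrow> nat \<Rightarrow> bool" where
  "app l w k = (if k < length l then l ! k else w (k - length l))"

lemma app_Nil[simp]: "app [] w = w" by (rule ext) (simp add: app_def)

lemma app_append: "app (a @ b) w = app a (app b w)"
  by (rule ext) (auto simp: app_def nth_append)

lemma app_Cons: "app (b # a) w = app [b] (app a w)"
  using app_append[of "[b]" a w] by simp

lemma infinite_app:
  assumes "infinite {k. w k}" shows "infinite {k. app l w k}"
proof -
  have "(\<lambda>k. k + length l) ` {k. w k} \<subseteq> {k. app l w k}" by (auto simp: app_def)
  moreover have "infinite ((\<lambda>k. k + length l) ` {k. w k})"
    using assms finite_imageD[of "\<lambda>k. k + length l" "{k. w k}"] by (auto simp: inj_on_def)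
  ultimately show ?thesis using finite_subset by blast
qed

lemma pos_range:
  fixes w :: "nat \<Rightarrow> bool"
  assumes "infinite {k. w k}"
  shows "{k. w k} = range (enumerate {k. w k})" "strict_mono (enumerate {k. w k})"
  using range_enumerate[OF assms] strict_mono_enumerate[OF assms] by auto

lemma rho_cons_F:
  assumes "infinite {k. w k}"
  shows "rho (app [False] w) = (\<lambda>k. \<not> rho w k)"
proof -
  let ?e = "enumerate {k. w k}"
  have "rho (app [False] w) = (\<lambda>k. odd (Suc (?e k)))"
  proof (rule rho_strict_mono)
    show "strict_mono (\<lambda>k. Suc (?e k))" using pos_range(2)[OF assms]
      by (simp add: strict_mono_def)
    show "{p. app [False] w p} = range (\<lambda>k. Suc (?e k))"
    proof
      show "{p. app [False] w p} \<subseteq> range (\<lambda>k. Suc (?e k))"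
      proof
        fix p assume "p \<in> {p. app [False] w p}"
        then obtain q where "p = Suc q" "w q" by (cases p) (auto simp: app_def)
        then show "p \<in> range (\<lambda>k. Suc (?e k))" using pos_range(1)[OF assms] by blast
      qed
      show "range (\<lambda>k. Suc (?e k)) \<subseteq> {p. app [False] w p}"
        using enumerate_in_set[OF assms] by (auto simp: app_def)
    qed
  qed
  then show ?thesis by (simp add: rho_def)
qed

lemma rho_cons_T:
  assumes "infinite {k. w k}"
  shows "rho (app [True] w) = app [False] (\<lambda>k. \<not> rho w k)"
proof -
  let ?e = "enumerate {k. w k}"
  let ?f = "\<lambda>k. case k of 0 \<Rightarrow> 0 | Suc j \<Rightarrow> Suc (?e j)"
  have h: "rho (app [True] w) = (\<lambda>k. odd (?f k))"
  proof (rule rho_strict_mono)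
    show "strict_mono ?f" using pos_range(2)[OF assms]
      by (auto simp: strict_mono_Suc_iff split: nat.splits)
    show "{p. app [True] w p} = range ?f"
    proof
      show "{p. app [True] w p} \<subseteq> range ?f"
      proof
        fix p assume p: "p \<in> {p. app [True] w p}"
        show "p \<in> range ?f"
        proof (cases p)
          case 0 then show ?thesis by (auto intro: range_eqI[of _ _ 0])
        next
          case (Suc q)
          with p have "w q" by (simp add: app_def)
          then obtain j where "?e j = q" using enumerate_Ex[OF assms, of q] \<open>w q\<close> by auto
          then show ?thesis using Suc by (auto intro!: range_eqI[of _ _ "Suc j"])
        qed
      qed
      show "range ?f \<subseteq> {p. app [True] w p}"
        using enumerate_in_set[OF assms] by (auto simp: app_def split: nat.splits)
    qed
  qed
  show ?thesis
  proof (rule ext)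
    fix k show "rho (app [True] w) k = app [False] (\<lambda>k. \<not> rho w k) k"
      unfolding h by (cases k) (simp_all add: app_def rho_def)
  qed
qed

fun rf :: "bool list \<Rightarrow> bool list" where
  "rf [] = []"
| "rf (b # a) = (if b then False # map Not (rf a) else map Not (rf a))"

lemma app_Not: "(\<lambda>k. \<not> app l w k) = app (map Not l) (\<lambda>k. \<not> w k)"
  by (rule ext) (simp add: app_def)

lemma s1: "infinite {k. app a w k} \<Longrightarrow> \<not> b \<Longrightarrow> rho (app (b # a) w) = (\<lambda>k. \<not> rho (app a w) k)"
  unfolding app_Cons[of b a w] by (simp add: rho_cons_F)

lemma s2: "infinite {k. app a w k} \<Longrightarrow> b \<Longrightarrow> rho (app (b # a) w) = app [False] (\<lambda>k. \<not> rho (app a w) k)"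
  unfolding app_Cons[of b a w] by (simp add: rho_cons_T)

lemma s4: "(\<lambda>k. \<not> (odd (length a) \<noteq> rho w k)) = (\<lambda>k. odd (length (b#a)) \<noteq> rho w k)"
        by auto

lemma rho_app:
  assumes "infinite {k. w k}"
  shows "rho (app a w) = app (rf a) (\<lambda>k. odd (length a) \<noteq> rho w k)"
proof (induction a)
  case Nil then show ?case by simp
next
  case (Cons b a)
  have inf: "infinite {k. app a w k}" using infinite_app[OF assms] .
  show ?case
  proof (cases b)
    case True
    have r: "rf (b#a) = [False] @ map Not (rf a)" using \<open>b\<close> by simp
    show ?thesis unfolding s2[OF inf \<open>b\<close>] Cons.IH app_Not r app_append s4[of _ _ b] ..
  next
    case False
    have r: "rf (b#a) = map Not (rf a)" using \<open>\<not> b\<close> by simp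
    show ?thesis unfolding s1[OF inf \<open>\<not>b\<close>] Cons.IH app_Not r s4[of _ _ b] ..
  qed
qed

lemma rho_app_even:
  assumes "infinite {k. w k}" "even (length a)"
  shows "rho (app a w) = app (rf a) (rho w)"
  using rho_app[OF assms(1), of a] assms(2) by simp



lemma inf_range_strict_mono:
  fixes f :: "nat \<Rightarrow> nat"
  assumes "strict_mono f" shows "infinite (range f)"
proof
  assume "finite (range f)"
  then have "finite (UNIV::nat set)" using finite_imageD strict_mono_imp_inj_on[OF assms] by blast
  then show False by simp
qed

definition Dw :: "(nat \<Rightarrow> bool) \<Rightarrow> nat \<Rightarrow> bool" where
  "Dw u k = (odd k = u (k div 2))"

lemma Dw_range: "{p. Dw u p} = range (\<lambda>j. 2 * j + (if u j then 1 else 0))"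
proof
  show "{p. Dw u p} \<subseteq> range (\<lambda>j. 2 * j + (if u j then 1 else 0))"
  proof
    fix p assume "p \<in> {p. Dw u p}"
    then have "p = 2 * (p div 2) + (if u (p div 2) then 1 else 0)"
      by (auto simp: Dw_def)
    then show "p \<in> range (\<lambda>j. 2 * j + (if u j then 1 else 0))" by blast
  qed
  show "range (\<lambda>j. 2 * j + (if u j then 1 else 0)) \<subseteq> {p. Dw u p}"
    by (auto simp: Dw_def split: if_splits)
qed

lemma Dw_mono: "strict_mono (\<lambda>j. 2 * j + (if u j then 1 else 0) :: nat)"
  by (rule strict_monoI) (auto split: if_splits)

lemma Dw_inf: "infinite {p. Dw u p}"
  unfolding Dw_range by (rule inf_range_strict_mono[OF Dw_mono])

lemma rho_Dw: "rho (Dw u) = u"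
  by (rule ext) (simp add: rho_strict_mono[OF Dw_mono Dw_range])

definition pad :: "bool list \<Rightarrow> bool list" where
  "pad l = l @ (if even (length l) then [False, False] else [False])"

lemma even_pad: "even (length (pad l))"
  by (simp add: pad_def)

lemma len_pad: "length l < length (pad l)"
  by (simp add: pad_def)

lemma rf_replicate: "rf (replicate n False) = []"
  by (induction n) auto

lemma rf_zeros: "rf (l @ replicate n False) = rf l"
  by (induction l) (auto simp: rf_replicate)

lemma rf_pad: "rf (pad l) = rf l"
proof -
  have "pad l = l @ replicate (if even (length l) then 2 else 1) False"
    by (simp add: pad_def numeral_2_eq_2)
  then show ?thesis by (simp add: rf_zeros)
qed

lemma len_rf: "length (rf l) = length (filter id l)"
  by (induction l) auto

lemma filter_map_Not: "length (filter (\<lambda>a. \<not> a) x) = length x - length (filter (\<lambda>a. a) x)"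
  by (induction x) (auto simp: Suc_diff_le length_filter_le)

lemma rf_count: "length (filter id (rf l)) \<le> length l div 2 \<and>
    length (rf l) - length (filter id (rf l)) \<le> (length l + 1) div 2"
proof (induction l)
  case Nil then show ?case by simp
next
  case (Cons b a)
  have le: "length (filter id (rf a)) \<le> length (rf a)" by (rule length_filter_le)
  show ?case using Cons le by (cases b) (auto simp: filter_map_Not o_def)
qed

lemma rf_rf_less:
  assumes "l \<noteq> []" shows "length (rf (rf l)) < length l"
proof -
  have "length (rf (rf l)) = length (filter id (rf l))" by (rule len_rf)
  also have "\<dots> \<le> length l div 2" using rf_count[of l] by blast
  also have "\<dots> < length l" using assms by (cases l) auto
  finally show ?thesis .
qed

definition step :: "bool list \<times> nat \<Rightarrow> bool list \<times> nat" where
  "step s = (if rf (fst s) = [] then (pad (from_nat (snd s)), Suc (snd s)) else (pad (rf (fst s)), snd s))"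

definition st :: "nat \<Rightarrow> bool list \<times> nat" where
  "st i = (step ^^ i) ([], 0)"

definition r :: "nat \<Rightarrow> bool list" where "r i = fst (st i)"

definition xs :: "nat \<Rightarrow> bool list" where
  "xs i = drop (length (rf (r i))) (r (Suc i))"

lemma st_Suc: "st (Suc i) = step (st i)"
  by (simp add: st_def)

lemma r_Suc: "r (Suc i) = rf (r i) @ xs i"
proof -
  have "take (length (rf (r i))) (r (Suc i)) = rf (r i)"
    by (simp add: r_def st_Suc step_def pad_def)
  then show ?thesis unfolding xs_def by (metis append_take_drop_id)
qed

lemma xs_ne: "xs i \<noteq> []"
proof -
  have "length (rf (r i)) < length (r (Suc i))"
    using len_pad[of "rf (r i)"] len_pad[of "from_nat (snd (st i))"] by (auto simp: r_def st_Suc step_def)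
  then show ?thesis by (simp add: xs_def)
qed

lemma even_r: "even (length (r i))"
  by (cases i) (auto simp: r_def st_def step_def even_pad)

function Vf :: "nat \<Rightarrow> nat \<Rightarrow> bool" where
  "Vf i k = (odd k = (if k div 2 < length (xs i) then xs i ! (k div 2)
      else if length (xs i) = 0 then False else Vf (Suc i) (k div 2 - length (xs i))))"
  by pat_completeness auto
termination
proof (relation "Wellfounded.measure snd")
  fix i k
  assume "\<not> k div 2 < length (xs i)" "length (xs i) \<noteq> 0"
  have "length (xs i) \<ge> 1" using \<open>length (xs i) \<noteq> 0\<close> by (simp add: Suc_le_eq)
  moreover have "k div 2 \<le> k" by simp
  ultimately have "k div 2 - length (xs i) < k" using \<open>\<not> k div 2 < length (xs i)\<close> by linarith
  then show "((Suc i, k div 2 - length (xs i)), i, k) \<in> Wellfounded.measure snd"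
    by simp
qed simp

declare Vf.simps[simp del]

lemma Vf_eq: "Vf i = Dw (app (xs i) (Vf (Suc i)))"
  using xs_ne[of i] by (intro ext) (simp add: Vf.simps[of i] Dw_def app_def)

definition Z :: "nat \<Rightarrow> nat \<Rightarrow> bool" where
  "Z i = app (r i) (Vf i)"

lemma Vf_inf: "infinite {k. Vf i k}"
  unfolding Vf_eq[of i] by (rule Dw_inf)

lemma Z_inf: "infinite {k. Z i k}"
  unfolding Z_def by (rule infinite_app[OF Vf_inf])

lemma rho_Z: "rho (Z i) = Z (Suc i)"
proof -
  have "rho (Z i) = app (rf (r i)) (rho (Vf i))"
    unfolding Z_def by (rule rho_app_even[OF Vf_inf even_r])
  also have "rho (Vf i) = app (xs i) (Vf (Suc i))"
    by (subst Vf_eq) (rule rho_Dw)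
  finally show ?thesis by (simp add: Z_def r_Suc app_append)
qed

lemma rho_Z_pow: "(rho ^^ n) (Z i) = Z (i + n)"
  by (induction n) (auto simp: rho_Z)



lemma kill: "\<exists>k. rf (fst ((step ^^ k) (l, c))) = [] \<and> snd ((step ^^ k) (l, c)) = c"
proof (induction "length (rf l)" arbitrary: l rule: less_induct)
  case less
  show ?case
  proof (cases "rf l = []")
    case True then show ?thesis by (intro exI[of _ 0]) simp
  next
    case False
    define f where "f = rf l"
    have s1: "(step ^^ 1) (l, c) = (pad f, c)" using False by (simp add: step_def f_def)
    show ?thesis
    proof (cases "rf f = []")
      case True
      then show ?thesis using s1 by (intro exI[of _ 1]) (simp add: rf_pad)
    next
      case False2: False
      have s2: "(step ^^ 2) (l, c) = (pad (rf f), c)"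
        using s1 False2 by (simp add: numeral_2_eq_2 step_def rf_pad)
      have "length (rf (pad (rf f))) < length (rf l)"
        using rf_rf_less[of f] False by (simp add: rf_pad f_def)
      then obtain k where k: "rf (fst ((step ^^ k) (pad (rf f), c))) = [] \<and> snd ((step ^^ k) (pad (rf f), c)) = c"
        using less by blast
      have "(step ^^ (k + 2)) (l, c) = (step ^^ k) (pad (rf f), c)"
        by (simp only: funpow_add o_apply s2)
      then show ?thesis using k by (intro exI[of _ "k + 2"]) simp
    qed
  qed
qed

lemma st_add: "st (i + k) = (step ^^ k) (st i)"
  by (simp only: st_def add.commute[of i k] funpow_add o_apply)

lemma counter_le: "snd (st i) \<le> i"
  by (induction i) (auto simp: st_Suc step_def st_def)

lemma reach: "\<exists>i. snd (st i) = c \<and> rf (r i) = []"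
proof (induction c)
  case 0
  obtain k where "rf (fst ((step ^^ k) ([], 0))) = [] \<and> snd ((step ^^ k) ([], 0)) = 0"
    using kill by blast
  then show ?case by (auto simp: st_def r_def)
next
  case (Suc c)
  then obtain i where i: "snd (st i) = c" "rf (r i) = []" by blast
  have si: "st (Suc i) = (pad (from_nat c), Suc c)"
    using i by (simp add: st_Suc step_def r_def)
  obtain k where k: "rf (fst ((step ^^ k) (pad (from_nat c), Suc c))) = [] \<and>
      snd ((step ^^ k) (pad (from_nat c), Suc c)) = Suc c"
    using kill by blast
  show ?case using k st_add[of "Suc i" k] si by (intro exI[of _ "Suc i + k"]) (simp add: r_def)
qed

lemma hit: "\<exists>i\<ge>c. r (Suc i) = pad (from_nat c)"
proof -
  obtain i where i: "snd (st i) = c" "rf (r i) = []" using reach by blast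
  then have "r (Suc i) = pad (from_nat c)" by (simp add: r_def st_Suc step_def)
  moreover have "c \<le> i" using counter_le[of i] i by simp
  ultimately show ?thesis by blast
qed

lemma prefix_hit: "\<exists>m\<ge>n. \<exists>w. Z m = app p w"
proof -
  let ?g = "\<lambda>k. to_nat (p @ replicate k False)"
  have "inj ?g" by (rule injI) simp
  then have "infinite (range ?g)" by (rule range_inj_infinite)
  then obtain c where c: "c \<ge> n" "c \<in> range ?g" using infinite_nat_iff_unbounded_le by blast
  then obtain k where ck: "c = ?g k" by blast
  obtain i where i: "i \<ge> c" "r (Suc i) = pad (from_nat c)" using hit by blast
  define q where "q = replicate k False @ (if even (length (p @ replicate k False)) then [False, False] else [False])"
  have "pad (from_nat c) = p @ q"
    unfolding ck from_nat_to_nat pad_def q_def by simp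
  then have "Z (Suc i) = app p (app q (Vf (Suc i)))"
    using i(2) by (simp add: Z_def app_append)
  moreover have "Suc i \<ge> n" using i c by simp
  ultimately show ?thesis by blast
qed



definition wt :: "(nat \<Rightarrow> bool) \<Rightarrow> nat \<Rightarrow> real" where
  "wt w k = (if w k then 1 else 0) / 2 ^ (Suc k)"

lemma word_val_wt: "word_val w = suminf (wt w)"
  unfolding word_val_def wt_def[abs_def] by (rule refl)

lemma wt_le: "wt w k \<le> (1/2) ^ Suc k"
  by (simp add: wt_def power_one_over)

lemma wt_nonneg: "0 \<le> wt w k"
  by (simp add: wt_def)

lemma summable_wt: "summable (wt w)"
proof (rule summable_comparison_test'[OF sums_summable[OF power_half_series], of 0])
  fix n :: nat
  show "norm (wt w n) \<le> (1/2) ^ Suc n"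
    using wt_nonneg[of w n] wt_le[of w n] by (simp only: real_norm_def abs_of_nonneg)
qed

lemma word_val_nonneg: "0 \<le> word_val w"
  unfolding word_val_wt by (rule suminf_nonneg[OF summable_wt wt_nonneg])

lemma word_val_le1: "word_val w \<le> 1"
proof -
  have "suminf (wt w) \<le> suminf (\<lambda>n. (1/2::real) ^ Suc n)"
    by (rule suminf_le[OF wt_le summable_wt sums_summable[OF power_half_series]])
  then show ?thesis unfolding word_val_wt using sums_unique[OF power_half_series] by simp
qed

definition lv :: "bool list \<Rightarrow> real" where
  "lv l = (\<Sum>j<length l. (if l ! j then 1 else 0) / 2 ^ Suc j)"

lemma word_val_app: "word_val (app l w) = lv l + word_val w / 2 ^ length l"
proof -
  have s: "suminf (wt (app l w)) = (\<Sum>n. wt (app l w) (n + length l)) + (\<Sum>i<length l. wt (app l w) i)"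
    by (rule suminf_split_initial_segment[OF summable_wt])
  have a: "(\<lambda>n. wt (app l w) (n + length l)) = (\<lambda>n. wt w n / 2 ^ length l)"
    by (rule ext) (simp add: wt_def app_def power_add)
  have b: "(\<Sum>i<length l. wt (app l w) i) = lv l"
    unfolding lv_def by (rule sum.cong) (auto simp: wt_def app_def)
  show ?thesis unfolding word_val_wt s a b suminf_divide[OF summable_wt] by simp
qed

lemma word_val_cons: "word_val (app [b] w) = (if b then 1/2 else 0) + word_val w / 2"
  by (simp add: word_val_app lv_def)

lemma word_val_pos: "infinite {k. w k} \<Longrightarrow> 0 < word_val w"
proof -
  assume "infinite {k. w k}"
  then obtain i where "w i" using not_finite_existsD by blast
  then have "0 < wt w i" by (simp add: wt_def)
  then show ?thesis unfolding word_val_wt by (rule suminf_pos2[OF summable_wt wt_nonneg])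
qed

lemma app_head: "app [w 0] (\<lambda>n. w (Suc n)) = w"
  by (rule ext) (auto simp: app_def)

lemma infinite_shift: "infinite {k. w k} \<Longrightarrow> infinite {k. w (Suc k)}"
proof -
  assume inf: "infinite {k. w k}"
  have "{k. w k} \<subseteq> insert 0 (Suc ` {k. w (Suc k)})"
    by (auto elim: nat.exhaust_sel) (metis image_eqI mem_Collect_eq not0_implies_Suc)
  then show ?thesis using inf finite_subset by blast
qed

lemma word_val_lt: "u 0 \<Longrightarrow> \<not> v 0 \<Longrightarrow> infinite {k. u k} \<Longrightarrow> word_val v < word_val u"
proof -
  assume h: "u 0" "\<not> v 0" "infinite {k. u k}"
  have "word_val u = 1/2 + word_val (\<lambda>n. u (Suc n)) / 2"
    using word_val_cons[of "u 0" "\<lambda>n. u (Suc n)", unfolded app_head] h by simp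
  moreover have "word_val v = word_val (\<lambda>n. v (Suc n)) / 2"
    using word_val_cons[of "v 0" "\<lambda>n. v (Suc n)", unfolded app_head] h by simp
  moreover have "0 < word_val (\<lambda>n. u (Suc n))" by (rule word_val_pos[OF infinite_shift[OF h(3)]])
  moreover have "word_val (\<lambda>n. v (Suc n)) \<le> 1" by (rule word_val_le1)
  ultimately show ?thesis by simp
qed

lemma word_val_neq_aux:
  "(\<forall>j<k. u j = v j) \<Longrightarrow> u k \<noteq> v k \<Longrightarrow> infinite {k. u k} \<Longrightarrow> infinite {k. v k}
    \<Longrightarrow> word_val u \<noteq> word_val v"
proof (induction k arbitrary: u v)
  case 0
  then show ?case using word_val_lt[of u v] word_val_lt[of v u] by (cases "u 0") auto
next
  case (Suc k)
  have "word_val (\<lambda>n. u (Suc n)) \<noteq> word_val (\<lambda>n. v (Suc n))"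
  proof (rule Suc.IH)
    show "infinite {k. u (Suc k)}" by (rule infinite_shift[OF Suc.prems(3)])
    show "infinite {k. v (Suc k)}" by (rule infinite_shift[OF Suc.prems(4)])
  qed (use Suc.prems in auto)
  moreover have "u 0 = v 0" using Suc.prems by auto
  moreover have "word_val u = (if u 0 then 1/2 else 0) + word_val (\<lambda>n. u (Suc n)) / 2"
    using word_val_cons[of "u 0" "\<lambda>n. u (Suc n)", unfolded app_head] by simp
  moreover have "word_val v = (if v 0 then 1/2 else 0) + word_val (\<lambda>n. v (Suc n)) / 2"
    using word_val_cons[of "v 0" "\<lambda>n. v (Suc n)", unfolded app_head] by simp
  ultimately show ?case by auto
qed

lemma word_val_inj:
  assumes "infinite {k. u k}" "infinite {k. v k}" "word_val u = word_val v"
  shows "u = v"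
proof (rule ccontr)
  assume "u \<noteq> v"
  then have ex: "\<exists>k. u k \<noteq> v k" by (auto simp: fun_eq_iff)
  define k where "k = (LEAST k. u k \<noteq> v k)"
  have "u k \<noteq> v k" unfolding k_def by (rule LeastI_ex[OF ex])
  moreover have "\<forall>j<k. u j = v j" unfolding k_def using not_less_Least by blast
  ultimately show False using word_val_neq_aux assms by blast
qed

lemma beta_word: "infinite {k. u k} \<Longrightarrow> beta (word_val u) = u"
  unfolding beta_def by (rule the_equality) (auto intro: word_val_inj)

lemma R_word: "infinite {k. u k} \<Longrightarrow> R (word_val u) = word_val (rho u)"
  using word_val_pos[of u] by (simp add: R_def beta_word)

lemma lv_snoc: "lv (p @ [b]) = lv p + (if b then 1 else 0) / 2 ^ Suc (length p)"
  unfolding lv_def by (simp add: nth_append)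

lemma approx:
  assumes "0 \<le> y" "y \<le> 1"
  shows "\<exists>p. length p = L \<and> lv p \<le> y \<and> y \<le> lv p + 1 / 2 ^ L"
proof (induction L)
  case 0 then show ?case using assms by (intro exI[of _ "[]"]) (simp add: lv_def)
next
  case (Suc L)
  then obtain p where p: "length p = L" "lv p \<le> y" "y \<le> lv p + 1 / 2 ^ L" by blast
  show ?case
  proof (cases "y \<le> lv p + 1 / 2 ^ Suc L")
    case True
    then show ?thesis using p by (intro exI[of _ "p @ [False]"]) (simp add: lv_snoc)
  next
    case False
    then show ?thesis using p by (intro exI[of _ "p @ [True]"]) (auto simp: lv_snoc)
  qed
qed

lemma near:
  assumes "length p = L" "lv p \<le> y" "y \<le> lv p + 1 / 2 ^ L"
  shows "dist (word_val (app p w)) y \<le> 1 / 2 ^ L"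
proof -
  have "word_val (app p w) = lv p + word_val w / 2 ^ L" using word_val_app assms(1) by simp
  moreover have "0 \<le> word_val w / 2 ^ L" "word_val w / 2 ^ L \<le> 1 / 2 ^ L"
    using word_val_nonneg[of w] word_val_le1[of w] by (auto simp: divide_right_mono)
  ultimately show ?thesis using assms by (auto simp: dist_real_def abs_le_iff)
qed

definition xz :: "nat \<Rightarrow> real" where "xz n = word_val (Z n)"

lemma R_xz: "R (xz n) = xz (Suc n)"
  unfolding xz_def R_word[OF Z_inf] rho_Z ..

lemma R_pow_xz: "(R ^^ k) (xz n) = xz (n + k)"
  by (induction k) (auto simp: R_xz)

lemma xz_01: "xz n \<in> {0..1}"
  using word_val_nonneg word_val_le1 by (simp add: xz_def)

lemma dense_xz:
  assumes "0 \<le> y" "y \<le> 1" "0 < e"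
  shows "\<exists>m\<ge>n. dist (xz m) y \<le> e"
proof -
  obtain L where L: "(1/2::real) ^ L < e" using real_arch_pow_inv[OF assms(3), of "1/2"] by auto
  obtain p where p: "length p = L" "lv p \<le> y" "y \<le> lv p + 1 / 2 ^ L"
    using approx[OF assms(1,2)] by blast
  obtain m w where m: "m \<ge> n" "Z m = app p w" using prefix_hit by blast
  have "dist (xz m) y \<le> 1 / 2 ^ L" unfolding xz_def m(2) by (rule near[OF p])
  also have "\<dots> \<le> e" using L by (simp add: power_one_over)
  finally show ?thesis using m by blast
qed

lemma xz_orbit: "{0..1} \<subseteq> closure {(R ^^ k) (xz n) | k. True}"
proof
  fix y :: real assume y: "y \<in> {0..1}"
  show "y \<in> closure {(R ^^ k) (xz n) | k. True}"
    unfolding closure_approachable_le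
  proof (intro allI impI)
    fix e :: real assume "0 < e"
    then obtain m where m: "m \<ge> n" "dist (xz m) y \<le> e" using dense_xz[of y e n] y by auto
    have "xz m = (R ^^ (m - n)) (xz n)" using m(1) by (simp add: R_pow_xz)
    then show "\<exists>z\<in>{(R ^^ k) (xz n) | k. True}. dist z y \<le> e" using m(2) by auto
  qed
qed

definition Bw :: "(nat \<Rightarrow> bool) \<Rightarrow> nat \<Rightarrow> bool" where
  "Bw e p = (p mod 4 = 2 * (if e (p div 4) then 1 else 0) + (if Z 0 (p div 4) then 1 else 0))"

definition bf :: "(nat \<Rightarrow> bool) \<Rightarrow> nat \<Rightarrow> nat" where
  "bf e j = 4 * j + 2 * (if e j then 1 else 0) + (if Z 0 j then 1 else 0)"

lemma bf_mono: "strict_mono (bf e)"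
  by (rule strict_monoI_Suc) (auto simp: bf_def)

lemma Bw_range: "{p. Bw e p} = range (bf e)"
proof
  show "{p. Bw e p} \<subseteq> range (bf e)"
  proof
    fix p assume "p \<in> {p. Bw e p}"
    then have m: "p mod 4 = 2 * (if e (p div 4) then 1 else 0) + (if Z 0 (p div 4) then 1 else 0)"
      by (simp add: Bw_def)
    have "p = 4 * (p div 4) + p mod 4" by simp
    then have "p = bf e (p div 4)" unfolding bf_def using m by linarith
    then show "p \<in> range (bf e)" by blast
  qed
  show "range (bf e) \<subseteq> {p. Bw e p}"
  proof
    fix p assume "p \<in> range (bf e)"
    then obtain j where j: "p = bf e j" by blast
    have r4: "2 * (if e j then 1 else 0) + (if Z 0 j then 1 else 0) < (4::nat)" by simp
    have gen: "\<And>q r::nat. r < 4 \<Longrightarrow> (4 * q + r) div 4 = q \<and> (4 * q + r) mod 4 = r" by presburger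
    have dm: "bf e j div 4 = j \<and> bf e j mod 4 = 2 * (if e j then 1 else 0) + (if Z 0 j then 1 else 0)"
      unfolding bf_def add.assoc by (rule gen[OF r4])
    show "p \<in> {p. Bw e p}" using dm unfolding j Bw_def by simp
  qed
qed

lemma Bw_inf: "infinite {p. Bw e p}"
  unfolding Bw_range by (rule inf_range_strict_mono[OF bf_mono])

lemma rho_Bw: "rho (Bw e) = Z 0"
  by (rule ext) (simp add: rho_strict_mono[OF bf_mono Bw_range] bf_def)

lemma Bw_inj: "inj Bw"
proof (rule injI)
  fix e e' assume h: "Bw e = Bw e'"
  show "e = e'"
  proof
    fix j
    have d: "(4*j+2) div 4 = (j::nat)" "(4*j+2) mod 4 = (2::nat)" "(4*j+3) div 4 = j" "(4*j+3) mod 4 = (3::nat)"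
      by presburger+
    have "e j = (Bw e (4 * j + 2) \<or> Bw e (4 * j + 3))" unfolding Bw_def d by auto
    moreover have "e' j = (Bw e' (4 * j + 2) \<or> Bw e' (4 * j + 3))" unfolding Bw_def d by auto
    ultimately show "e j = e' j" using h by simp
  qed
qed

lemma uncountable_bool_seq: "uncountable (UNIV :: (nat \<Rightarrow> bool) set)"
proof
  assume c: "countable (UNIV :: (nat \<Rightarrow> bool) set)"
  define g where "g = from_nat_into (UNIV :: (nat \<Rightarrow> bool) set)"
  have "range g = UNIV" unfolding g_def using c by simp
  then obtain m where m: "g m = (\<lambda>n. \<not> g n n)" by (metis UNIV_I imageE)
  then have "g m m = (\<not> g m m)" by (metis)
  then show False by simp
qed

theorem proposition6p7:
  defines "S \<equiv> {x \<in> {0..1::real}. {0..1} \<subseteq> closure {(R ^^ n) x | n. True}}"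
  shows "uncountable S \<and> {0..1} \<subseteq> closure S"
proof
  have xS: "xz n \<in> S" for n
    unfolding S_def using xz_01 xz_orbit by blast
  have BS: "word_val (Bw e) \<in> S" for e
  proof -
    have R1: "R (word_val (Bw e)) = xz 0"
      unfolding R_word[OF Bw_inf] rho_Bw xz_def ..
    have "{(R ^^ n) (xz 0) | n. True} \<subseteq> {(R ^^ n) (word_val (Bw e)) | n. True}"
    proof
      fix z assume "z \<in> {(R ^^ n) (xz 0) | n. True}"
      then obtain n where "z = (R ^^ n) (xz 0)" by blast
      then have "z = (R ^^ Suc n) (word_val (Bw e))" by (simp only: funpow_Suc_right o_apply R1)
      then show "z \<in> {(R ^^ n) (word_val (Bw e)) | n. True}" by blast
    qed
    then have "closure {(R ^^ n) (xz 0) | n. True} \<subseteq> closure {(R ^^ n) (word_val (Bw e)) | n. True}"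
      by (rule closure_mono)
    then show ?thesis unfolding S_def using xz_orbit[of 0] word_val_nonneg word_val_le1 by auto
  qed
  show "uncountable S"
  proof
    assume "countable S"
    then have "countable (range (\<lambda>e. word_val (Bw e)))"
      by (rule countable_subset[rotated]) (auto intro: BS)
    moreover have "inj (\<lambda>e. word_val (Bw e))"
    proof (rule injI)
      fix e e' assume "word_val (Bw e) = word_val (Bw e')"
      then have "Bw e = Bw e'" using word_val_inj Bw_inf by blast
      then show "e = e'" using Bw_inj by (simp add: inj_eq)
    qed
    ultimately have "countable (UNIV :: (nat \<Rightarrow> bool) set)"
      by (rule countable_image_inj_on)
    then show False using uncountable_bool_seq by simp
  qed
  show "{0..1} \<subseteq> closure S"
  proof
    fix y :: real assume y: "y \<in> {0..1}"
    show "y \<in> closure S" unfolding closure_approachable_le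
    proof (intro allI impI)
      fix e :: real assume "0 < e"
      then obtain m where "dist (xz m) y \<le> e" using dense_xz[of y e 0] y by auto
      then show "\<exists>z\<in>S. dist z y \<le> e" using xS by blast
    qed
  qed
qed

end
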